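(* Let $\Gamma$ be a commutative topological group and let $(X,\Gamma)$ be a minimal, weakly mixing, metric, tame dynamical system. Then $X$ is a single point.
   Context: A dynamical system $(X,\Gamma)$: compact Hausdorff $X$ with continuous action of $\Gamma$; metric means $X$ metrizable. $E(X,\Gamma)$ is the pointwise closure in $X^X$ of $\{x\mapsto\gamma x\}$; $(X,\Gamma)$ is tame if $E(X,\Gamma)$ is separable and Fréchet (every point in the closure of a set is a limit of a sequence from it). Weakly mixing: the product system $(X\times X,\Gamma)$ with diagonal action is topologically transitive. *)

theory Defs
  imports "HOL-Analysis.Analysis"
begin

definition group_action :: "('g::ab_group_add \<Rightarrow> 'x \<Rightarrow> 'x) \<Rightarrow> bool" where
  "group_action act \<longleftrightarrow> (\<forall>x. act 0 x = x) \<and> (\<forall>g h x. act (g + h) x = act g (act h x))"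

definition dynamical_system ::
  "('g::{topological_ab_group_add} \<Rightarrow> 'x::t2_space \<Rightarrow> 'x) \<Rightarrow> bool" where
  "dynamical_system act \<longleftrightarrow> group_action act \<and> compact (UNIV :: 'x set) \<and>
     continuous_on UNIV (\<lambda>p. act (fst p) (snd p))"

definition orbit :: "('g \<Rightarrow> 'x \<Rightarrow> 'x) \<Rightarrow> 'x \<Rightarrow> 'x set" where
  "orbit act x = range (\<lambda>g. act g x)"

definition minimal_system :: "('g \<Rightarrow> 'x::topological_space \<Rightarrow> 'x) \<Rightarrow> bool" where
  "minimal_system act \<longleftrightarrow> (\<forall>x. closure (orbit act x) = UNIV)"

definition top_transitive :: "('g \<Rightarrow> 'x::topological_space \<Rightarrow> 'x) \<Rightarrow> bool" where
  "top_transitive act \<longleftrightarrow> (\<forall>U V. open U \<longrightarrow> open V \<longrightarrow> U \<noteq> {} \<longrightarrow> V \<noteq> {} \<longrightarrow>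
      (\<exists>g. act g ` U \<inter> V \<noteq> {}))"

definition diag_action :: "('g \<Rightarrow> 'x \<Rightarrow> 'x) \<Rightarrow> 'g \<Rightarrow> 'x \<times> 'x \<Rightarrow> 'x \<times> 'x" where
  "diag_action act g p = (act g (fst p), act g (snd p))"

definition weakly_mixing :: "('g \<Rightarrow> 'x::topological_space \<Rightarrow> 'x) \<Rightarrow> bool" where
  "weakly_mixing act \<longleftrightarrow> top_transitive (diag_action act)"

text \<open>Enveloping semigroup: pointwise (product topology) closure of the maps x \<mapsto> g x in X^X.\<close>
definition enveloping :: "('g \<Rightarrow> 'x \<Rightarrow> 'x::topological_space) \<Rightarrow> ('x \<Rightarrow> 'x) set" where
  "enveloping act = closure (range act)"

definition separable_set :: "'a::topological_space set \<Rightarrow> bool" where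
  "separable_set S \<longleftrightarrow> (\<exists>D. countable D \<and> D \<subseteq> S \<and> S \<subseteq> closure D)"

definition frechet_set :: "'a::topological_space set \<Rightarrow> bool" where
  "frechet_set S \<longleftrightarrow> (\<forall>A \<subseteq> S. \<forall>f \<in> S \<inter> closure A.
      \<exists>s. (\<forall>n. s n \<in> A) \<and> s \<longlonglongrightarrow> f)"

definition tame :: "('g \<Rightarrow> 'x \<Rightarrow> 'x::topological_space) \<Rightarrow> bool" where
  "tame act \<longleftrightarrow> separable_set (enveloping act) \<and> frechet_set (enveloping act)"

end

theory Submission
  imports Defs
begin

lemma compact_fun: "compact (UNIV :: ('a \<Rightarrow> 'b::topological_space) set)" if "compact (UNIV::'b set)"
proof -
  have "compact_space (euclidean::'b topology)" using that by (simp add: compact_space_def)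
  then have "compact_space (product_topology (\<lambda>i::'a. (euclidean::'b topology)) UNIV)"
    by (simp add: compact_space_product_topology)
  then have "compact_space (euclidean :: ('a \<Rightarrow> 'b) topology)"
    by (simp add: euclidean_product_topology)
  then show ?thesis by (simp add: compact_space_def)
qed

lemma ptw: "(s \<longlonglongrightarrow> (f::'a \<Rightarrow> 'b::topological_space)) \<Longrightarrow> ((\<lambda>n. s n x) \<longlonglongrightarrow> f x)"
  using continuous_on_tendsto_compose[OF continuous_on_product_coordinates, of s f sequentially x]
  by auto

lemma act_cont:
  assumes "dynamical_system act"
  shows "continuous_on UNIV (act g)"
proof -
  have c: "continuous_on UNIV (\<lambda>p. act (fst p) (snd p))" using assms by (simp add: dynamical_system_def)
  have "continuous_on UNIV (\<lambda>x. (g, x))" by (intro continuous_intros)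
  from continuous_on_compose2[OF c this] show ?thesis by simp
qed

lemma act_open: "dynamical_system act \<Longrightarrow> open U \<Longrightarrow> open (act g -` U)"
  using act_cont[of act g] continuous_on_open_vimage[of UNIV "act g"] by (metis Int_UNIV_right open_UNIV)

lemma act_closed: "dynamical_system act \<Longrightarrow> closed U \<Longrightarrow> closed (act g -` U)"
  using act_cont[of act g] continuous_on_closed_vimage[of UNIV "act g"] by (metis Int_UNIV_right closed_UNIV)

lemma act_comm:
  fixes act :: "'g::ab_group_add \<Rightarrow> 'x \<Rightarrow> 'x"
  assumes "group_action act"
  shows "act h (act g x) = act g (act h x)"
proof -
  have "act h (act g x) = act (h + g) x" using assms unfolding group_action_def by simp
  also have "\<dots> = act (g + h) x" by (simp add: add.commute)
  also have "\<dots> = act g (act h x)" using assms unfolding group_action_def by simp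
  finally show ?thesis .
qed

lemma wm_pair:
  fixes act :: "'g::topological_ab_group_add \<Rightarrow> 'x::t2_space \<Rightarrow> 'x"
  assumes "weakly_mixing act" "open U1" "open V1" "open U2" "open V2"
    "U1 \<noteq> {}" "V1 \<noteq> {}" "U2 \<noteq> {}" "V2 \<noteq> {}"
  shows "\<exists>g. act g ` U1 \<inter> U2 \<noteq> {} \<and> act g ` V1 \<inter> V2 \<noteq> {}"
proof -
  have o1: "open (U1 \<times> V1)" using assms(2,3) by (rule open_Times)
  have o2: "open (U2 \<times> V2)" using assms(4,5) by (rule open_Times)
  have n1: "U1 \<times> V1 \<noteq> {}" using assms(6,7) by simp
  have n2: "U2 \<times> V2 \<noteq> {}" using assms(8,9) by simp
  have "\<exists>g. diag_action act g ` (U1 \<times> V1) \<inter> (U2 \<times> V2) \<noteq> {}"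
  proof -
    have T: "\<forall>U V. open U \<longrightarrow> open V \<longrightarrow> U \<noteq> {} \<longrightarrow> V \<noteq> {} \<longrightarrow>
      (\<exists>g. diag_action act g ` U \<inter> V \<noteq> {})"
      using assms(1) unfolding weakly_mixing_def top_transitive_def .
    show ?thesis by (rule T[rule_format, OF o1 o2 n1 n2])
  qed
  then obtain g where "diag_action act g ` (U1 \<times> V1) \<inter> (U2 \<times> V2) \<noteq> {}" ..
  then have "\<exists>y. y \<in> diag_action act g ` (U1 \<times> V1) \<inter> (U2 \<times> V2)" by (metis ex_in_conv)
  then obtain y where "y \<in> diag_action act g ` (U1 \<times> V1) \<inter> (U2 \<times> V2)" ..
  then have y: "y \<in> diag_action act g ` (U1 \<times> V1)" "y \<in> U2 \<times> V2" by (rule IntD1, rule IntD2)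
  from y(1) obtain p where p: "p \<in> U1 \<times> V1" "y = diag_action act g p" by (rule imageE)
  have "act g (fst p) \<in> U2" "act g (snd p) \<in> V2"
    using y(2) p(2) unfolding diag_action_def by (simp_all add: mem_Times_iff)
  moreover have "fst p \<in> U1" "snd p \<in> V1" using p(1) by (simp_all add: mem_Times_iff)
  ultimately have "act g (fst p) \<in> act g ` U1 \<inter> U2" "act g (snd p) \<in> act g ` V1 \<inter> V2" by simp_all
  then show ?thesis by blast
qed

lemma filter_prop:
  fixes act :: "'g::topological_ab_group_add \<Rightarrow> 'x::t2_space \<Rightarrow> 'x"
  assumes ds: "dynamical_system act" and wm: "weakly_mixing act"
  shows "finite P \<Longrightarrow> (\<forall>(U,V)\<in>P. open U \<and> open V \<and> U \<noteq> {} \<and> V \<noteq> {}) \<Longrightarrow>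
    \<exists>U' V'. open U' \<and> open V' \<and> U' \<noteq> {} \<and> V' \<noteq> {} \<and>
      (\<forall>h. act h ` U' \<inter> V' \<noteq> {} \<longrightarrow> (\<forall>(U,V)\<in>P. act h ` U \<inter> V \<noteq> {}))"
proof (induction P rule: finite_induct)
  case empty
  show ?case by (rule exI[of _ UNIV], rule exI[of _ UNIV]) auto
next
  case (insert p P)
  obtain U2 V2 where p: "p = (U2, V2)" by (cases p)
  from insert obtain U1 V1 where U1: "open U1" "open V1" "U1 \<noteq> {}" "V1 \<noteq> {}"
    and H: "\<forall>h. act h ` U1 \<inter> V1 \<noteq> {} \<longrightarrow> (\<forall>(U,V)\<in>P. act h ` U \<inter> V \<noteq> {})" by auto
  have U2: "open U2" "open V2" "U2 \<noteq> {}" "V2 \<noteq> {}" using insert.prems p by auto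
  obtain g where g: "act g ` U1 \<inter> U2 \<noteq> {}" "act g ` V1 \<inter> V2 \<noteq> {}"
    using wm_pair[OF wm U1(1,2) U2(1,2) U1(3,4) U2(3,4)] by blast
  define U3 where "U3 = U1 \<inter> act g -` U2"
  define V3 where "V3 = V1 \<inter> act g -` V2"
  have ga: "group_action act" using ds by (simp add: dynamical_system_def)
  have "open U3" "open V3" unfolding U3_def V3_def using U1 U2 act_open[OF ds] by auto
  moreover have "U3 \<noteq> {}" "V3 \<noteq> {}" using g unfolding U3_def V3_def by auto
  moreover have "\<forall>h. act h ` U3 \<inter> V3 \<noteq> {} \<longrightarrow> (\<forall>(U,V)\<in>insert p P. act h ` U \<inter> V \<noteq> {})"
  proof (intro allI impI)
    fix h assume "act h ` U3 \<inter> V3 \<noteq> {}"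
    then obtain u where u: "u \<in> U3" "act h u \<in> V3" by auto
    have "act h ` U1 \<inter> V1 \<noteq> {}" using u unfolding U3_def V3_def by auto
    then have "\<forall>(U,V)\<in>P. act h ` U \<inter> V \<noteq> {}" using H by blast
    moreover have "act h (act g u) \<in> V2" using u act_comm[OF ga, of h g u] unfolding V3_def by auto
    then have "act h ` U2 \<inter> V2 \<noteq> {}" using u unfolding U3_def by auto
    ultimately show "\<forall>(U,V)\<in>insert p P. act h ` U \<inter> V \<noteq> {}" using p by auto
  qed
  ultimately show ?case by (intro exI[of _ U3] exI[of _ V3]) simp
qed

lemma filter_exists:
  fixes act :: "'g::topological_ab_group_add \<Rightarrow> 'x::t2_space \<Rightarrow> 'x"
  assumes ds: "dynamical_system act" and wm: "weakly_mixing act"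
    and "finite P" "\<forall>(U,V)\<in>P. open U \<and> open V \<and> U \<noteq> {} \<and> V \<noteq> {}"
  shows "\<exists>h. \<forall>(U,V)\<in>P. act h ` U \<inter> V \<noteq> {}"
proof -
  obtain U' V' where U': "open U'" "open V'" "U' \<noteq> {}" "V' \<noteq> {}"
    and H: "\<forall>h. act h ` U' \<inter> V' \<noteq> {} \<longrightarrow> (\<forall>(U,V)\<in>P. act h ` U \<inter> V \<noteq> {})"
    using filter_prop[OF ds wm assms(3,4)] by blast
  obtain g where "act g ` U' \<inter> V' \<noteq> {}"
    using wm_pair[OF wm U'(1) U'(1) U'(2) U'(2) U'(3) U'(3) U'(4) U'(4)] by blast
  then have "\<forall>(U,V)\<in>P. act g ` U \<inter> V \<noteq> {}" by (rule mp[OF spec[OF H]])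
  then show ?thesis by (rule exI)
qed


definition Wl :: "('g \<Rightarrow> 'x \<Rightarrow> 'x) \<Rightarrow> (bool \<Rightarrow> 'x set) \<Rightarrow> 'g list \<Rightarrow> bool list \<Rightarrow> 'x set" where
  "Wl act Ub gl \<sigma> = {x. \<forall>i<length gl. act (gl!i) x \<in> Ub (\<sigma>!i)}"

definition Good :: "('g \<Rightarrow> 'x \<Rightarrow> 'x) \<Rightarrow> (bool \<Rightarrow> 'x set) \<Rightarrow> 'g list \<Rightarrow> bool" where
  "Good act Ub gl \<longleftrightarrow> (\<forall>\<sigma>. length \<sigma> = length gl \<longrightarrow> Wl act Ub gl \<sigma> \<noteq> {})"

lemma good_step:
  fixes act :: "'g::topological_ab_group_add \<Rightarrow> 'x::t2_space \<Rightarrow> 'x"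
  assumes ds: "dynamical_system act" and wm: "weakly_mixing act"
    and Ub: "\<forall>c. open (Ub c) \<and> Ub c \<noteq> {}" and G: "Good act Ub gl"
  shows "\<exists>h. Good act Ub (gl @ [h])"
proof -
  define S where "S = {\<sigma>::bool list. length \<sigma> = length gl}"
  define P where "P = (\<lambda>(\<sigma>,b). (Wl act Ub gl \<sigma>, Ub b)) ` (S \<times> (UNIV::bool set))"
  have "S = {xs. set xs \<subseteq> (UNIV::bool set) \<and> length xs = length gl}" unfolding S_def by simp
  then have "finite S" using finite_lists_length_eq[of "UNIV::bool set" "length gl"] by simp
  then have fP: "finite P" unfolding P_def by simp
  have oW: "open (Wl act Ub gl \<sigma>)" for \<sigma>
  proof -
    have "Wl act Ub gl \<sigma> = (\<Inter>i\<in>{..<length gl}. act (gl!i) -` Ub (\<sigma>!i))"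
      unfolding Wl_def by auto
    moreover have "open (\<Inter>i\<in>{..<length gl}. act (gl!i) -` Ub (\<sigma>!i))"
      using Ub act_open[OF ds] by (intro open_INT) auto
    ultimately show ?thesis by simp
  qed
  have "\<forall>(U,V)\<in>P. open U \<and> open V \<and> U \<noteq> {} \<and> V \<noteq> {}"
    using oW Ub G unfolding P_def S_def Good_def by auto
  then obtain h where h: "\<forall>(U,V)\<in>P. act h ` U \<inter> V \<noteq> {}"
    using filter_exists[OF ds wm fP] by blast
  have "Good act Ub (gl @ [h])" unfolding Good_def
  proof (intro allI impI)
    fix \<tau> :: "bool list" assume lt: "length \<tau> = length (gl @ [h])"
    then have "\<tau> \<noteq> []" by auto
    define \<sigma> where "\<sigma> = butlast \<tau>"
    define b where "b = last \<tau>"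
    have tau: "\<tau> = \<sigma> @ [b]" unfolding \<sigma>_def b_def using \<open>\<tau> \<noteq> []\<close> by simp
    have ls: "length \<sigma> = length gl" using lt tau by simp
    have "(Wl act Ub gl \<sigma>, Ub b) \<in> P" unfolding P_def S_def using ls by auto
    then have "act h ` Wl act Ub gl \<sigma> \<inter> Ub b \<noteq> {}" using h by auto
    then obtain x where x: "x \<in> Wl act Ub gl \<sigma>" "act h x \<in> Ub b" by auto
    have "x \<in> Wl act Ub (gl @ [h]) \<tau>"
      unfolding Wl_def
    proof (intro CollectI allI impI)
      fix i assume "i < length (gl @ [h])"
      then have "i < length gl \<or> i = length gl" by auto
      then show "act ((gl @ [h]) ! i) x \<in> Ub (\<tau> ! i)"
      proof
        assume i: "i < length gl"
        then show ?thesis using x(1) ls unfolding Wl_def tau by (simp add: nth_append)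
      next
        assume i: "i = length gl"
        then show ?thesis using x(2) ls unfolding tau by (simp add: nth_append)
      qed
    qed
    then show "Wl act Ub (gl @ [h]) \<tau> \<noteq> {}" by auto
  qed
  then show ?thesis by blast
qed

primrec Gs :: "('g \<Rightarrow> 'x \<Rightarrow> 'x) \<Rightarrow> (bool \<Rightarrow> 'x set) \<Rightarrow> nat \<Rightarrow> 'g list" where
  "Gs act Ub 0 = []"
| "Gs act Ub (Suc k) = Gs act Ub k @ [SOME h. Good act Ub (Gs act Ub k @ [h])]"

lemma Gs_length: "length (Gs act Ub k) = k"
  by (induction k) auto

lemma Gs_nth: "i < k \<Longrightarrow> Gs act Ub k ! i = Gs act Ub (Suc i) ! i"
proof (induction k)
  case 0 then show ?case by simp
next
  case (Suc k)
  show ?case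
  proof (cases "i < k")
    case True
    then have "Gs act Ub (Suc k) ! i = Gs act Ub k ! i" by (simp add: nth_append Gs_length)
    then show ?thesis using Suc True by simp
  next
    case False
    then have "i = k" using Suc by simp
    then show ?thesis by simp
  qed
qed

lemma Gs_good:
  fixes act :: "'g::topological_ab_group_add \<Rightarrow> 'x::t2_space \<Rightarrow> 'x"
  assumes ds: "dynamical_system act" and wm: "weakly_mixing act"
    and Ub: "\<forall>c. open (Ub c) \<and> Ub c \<noteq> {}"
  shows "Good act Ub (Gs act Ub k)"
proof (induction k)
  case 0 then show ?case unfolding Good_def Wl_def by simp
next
  case (Suc k)
  from someI_ex[OF good_step[OF ds wm Ub Suc]] show ?case by simp
qed

lemma indep:
  fixes act :: "'g::topological_ab_group_add \<Rightarrow> 'x::t2_space \<Rightarrow> 'x"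
  assumes ds: "dynamical_system act" and wm: "weakly_mixing act"
    and Ub: "\<forall>c. open (Ub c) \<and> Ub c \<noteq> {}"
  shows "\<exists>x. \<forall>i<length \<sigma>. act (Gs act Ub (Suc i) ! i) x \<in> Ub (\<sigma>!i)"
proof -
  have "Wl act Ub (Gs act Ub (length \<sigma>)) \<sigma> \<noteq> {}"
    using Gs_good[OF ds wm Ub, of "length \<sigma>"] unfolding Good_def by (simp add: Gs_length)
  then obtain x where "x \<in> Wl act Ub (Gs act Ub (length \<sigma>)) \<sigma>" by blast
  then have "\<forall>i<length \<sigma>. act (Gs act Ub (Suc i) ! i) x \<in> Ub (\<sigma>!i)"
    unfolding Wl_def by (simp add: Gs_length Gs_nth)
  then show ?thesis by blast
qed

primrec subs :: "(nat \<Rightarrow> nat) \<Rightarrow> nat \<Rightarrow> nat" where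
  "subs k 0 = 0"
| "subs k (Suc j) = (SOME n. n > subs k j \<and> k n > k (subs k j))"

lemma subs_mono:
  assumes unb: "\<forall>M. \<exists>n. k n > M"
  shows "strict_mono (subs k) \<and> strict_mono (k \<circ> subs k)"
proof -
  have ex: "\<exists>n. n > N \<and> k n > M" for N M
  proof -
    obtain n where n: "k n > max M (Max (k ` {..N}))" using unb by blast
    have "n > N"
    proof (rule ccontr)
      assume "\<not> n > N"
      then have "n \<in> {..N}" by simp
      then have "k n \<le> Max (k ` {..N})" by (intro Max_ge) auto
      then show False using n by linarith
    qed
    then show ?thesis using n by auto
  qed
  have "subs k (Suc j) > subs k j \<and> k (subs k (Suc j)) > k (subs k j)" for j
    using someI_ex[OF ex[of "subs k j" "k (subs k j)"]] by simp
  then show ?thesis unfolding strict_mono_Suc_iff by simp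
qed


theorem mainTheorem8:
  fixes act :: "'g::topological_ab_group_add \<Rightarrow> 'x::metric_space \<Rightarrow> 'x"
  assumes "dynamical_system act"
    and "minimal_system act"
    and "weakly_mixing act"
    and "tame act"
  shows "\<exists>x0::'x. (UNIV :: 'x set) = {x0}"
proof (rule ccontr)
  assume nt: "\<not> ?thesis"
  note ds = assms(1) and wm = assms(3)
  have cX: "compact (UNIV::'x set)" using ds by (simp add: dynamical_system_def)
  obtain a :: 'x where True by blast
  have "UNIV \<noteq> {a}" using nt by blast
  then obtain b :: 'x where "b \<noteq> a" by blast
  define d where "d = dist a b"
  have d: "d > 0" unfolding d_def using \<open>b \<noteq> a\<close> by simp
  define Ub where "Ub = (\<lambda>c. if c then ball b (d/4) else ball a (d/4))"
  define Cb where "Cb = (\<lambda>c. if c then cball b (d/4) else cball a (d/4))"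
  have Ub: "\<forall>c. open (Ub c) \<and> Ub c \<noteq> {}"
  proof
    fix c show "open (Ub c) \<and> Ub c \<noteq> {}"
      unfolding Ub_def using d by (cases c) (auto simp: ball_eq_empty)
  qed
  have UC: "\<And>y c. y \<in> Ub c \<Longrightarrow> y \<in> Cb c" unfolding Ub_def Cb_def
    by (auto split: if_splits)
  have Cc: "\<And>c. closed (Cb c)" unfolding Cb_def by auto
  have far: "dist y z \<ge> d/2" if "y \<in> Cb True" "z \<in> Cb False" for y z
  proof -
    have "dist b y \<le> d/4" "dist a z \<le> d/4" using that unfolding Cb_def by auto
    moreover have "d \<le> dist a z + dist z y + dist y b"
      unfolding d_def by (metis dist_triangle add.commute dist_triangle order_trans add_mono order_refl dist_triangle2)
    ultimately show ?thesis by (simp add: dist_commute)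
  qed
  define g where "g i = Gs act Ub (Suc i) ! i" for i
  have ind: "\<And>\<sigma>. \<exists>x. \<forall>i<length \<sigma>. act (g i) x \<in> Ub (\<sigma>!i)"
    unfolding g_def using indep[OF ds wm Ub] by blast
  have nc: "\<not> (\<forall>x. (\<lambda>j. act (g (r j)) x) \<longlonglongrightarrow> f x)" if r: "inj r" for r :: "nat \<Rightarrow> nat" and f
  proof
    assume conv: "\<forall>x. (\<lambda>j. act (g (r j)) x) \<longlonglongrightarrow> f x"
    define K where "K j = act (g (r j)) -` Cb (odd j)" for j
    have "UNIV \<inter> (\<Inter>j\<in>UNIV. K j) \<noteq> {}"
    proof (rule compact_imp_fip_image[OF cX])
      fix j :: nat show "closed (K j)" unfolding K_def using act_closed[OF ds Cc] .
    next
      fix J :: "nat set" assume J: "finite J" "J \<subseteq> UNIV"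
      define m where "m = Suc (Max (r ` J))"
      define \<sigma> where "\<sigma> = map (\<lambda>i. odd (inv r i)) [0..<m]"
      obtain x where x: "\<forall>i<length \<sigma>. act (g i) x \<in> Ub (\<sigma>!i)" using ind by blast
      have "x \<in> K j" if "j \<in> J" for j
      proof -
        have "r j \<le> Max (r ` J)" using J that by (intro Max_ge) auto
        then have rj: "r j < m" unfolding m_def by simp
        then have s1: "\<sigma> ! (r j) = odd j" unfolding \<sigma>_def using r by (simp add: inv_f_f)
        have s2: "r j < length \<sigma>" unfolding \<sigma>_def using rj by simp
        have "act (g (r j)) x \<in> Ub (\<sigma> ! (r j))" using x s2 by blast
        then have "act (g (r j)) x \<in> Ub (odd j)" using s1 by simp
        then show ?thesis unfolding K_def using UC by simp
      qed
      then show "UNIV \<inter> (\<Inter>j\<in>J. K j) \<noteq> {}" by blast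
    qed
    then obtain x where x: "\<And>j. act (g (r j)) x \<in> Cb (odd j)" unfolding K_def by blast
    obtain N where N: "\<forall>n\<ge>N. dist (act (g (r n)) x) (f x) < d/4"
      using metric_LIMSEQ_D[OF conv[rule_format, of x], of "d/4"] d by auto
    have e1: "dist (act (g (r (2*N))) x) (f x) < d/4" using N by simp
    have e2: "dist (act (g (r (Suc (2*N)))) x) (f x) < d/4" using N by simp
    have c1: "act (g (r (2*N))) x \<in> Cb False" using x[of "2*N"] by simp
    have c2: "act (g (r (Suc (2*N)))) x \<in> Cb True" using x[of "Suc (2*N)"] by simp
    have "dist (act (g (r (Suc (2*N)))) x) (act (g (r (2*N))) x) \<ge> d/2" using far[OF c2 c1] .
    moreover have "dist (act (g (r (Suc (2*N)))) x) (act (g (r (2*N))) x) < d/2"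
      using e1 e2 dist_triangle2[of "act (g (r (Suc (2*N)))) x" "act (g (r (2*N))) x" "f x"] by linarith
    ultimately show False by linarith
  qed
  have injg: "inj (\<lambda>n. act (g n))"
  proof (rule injI)
    fix n m assume eq: "act (g n) = act (g m)"
    show "n = m"
    proof (rule ccontr)
      assume nm: "n \<noteq> m"
      define \<sigma> where "\<sigma> = map (\<lambda>i. i = m) [0..<Suc (max n m)]"
      obtain x where x: "\<forall>i<length \<sigma>. act (g i) x \<in> Ub (\<sigma>!i)" using ind by blast
      have l1: "n < length \<sigma>" unfolding \<sigma>_def by simp
      have l2: "m < length \<sigma>" unfolding \<sigma>_def by simp
      have e1: "\<sigma> ! n = False" unfolding \<sigma>_def using nm by (simp del: upt_Suc add: nth_upt less_Suc_eq_le)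
      have e2: "\<sigma> ! m = True" unfolding \<sigma>_def by (simp del: upt_Suc add: nth_upt less_Suc_eq_le)
      have "act (g n) x \<in> Ub (\<sigma> ! n)" using x l1 by blast
      then have "act (g n) x \<in> Ub False" using e1 by simp
      moreover have "act (g m) x \<in> Ub (\<sigma> ! m)" using x l2 by blast
      then have "act (g m) x \<in> Ub True" using e2 by simp
      ultimately have c1: "act (g m) x \<in> Cb False" and c2: "act (g m) x \<in> Cb True" using eq UC by auto
      have "d/2 \<le> dist (act (g m) x) (act (g m) x)" using far[OF c2 c1] .
      then show False using d by simp
    qed
  qed
  define F where "F = range (\<lambda>n. act (g n))"
  have infF: "infinite F"
  proof
    assume "finite F"
    then have "finite (UNIV::nat set)" unfolding F_def using finite_imageD[OF _ injg] by blast
    then show False by simp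
  qed
  have cfun: "compact (UNIV :: ('x \<Rightarrow> 'x) set)" using compact_fun[OF cX] .
  obtain f where "f islimpt F" using Heine_Borel_imp_Bolzano_Weierstrass[OF cfun infF] by blast
  then have fcl: "f \<in> closure (F - {f})" by (simp add: islimpt_in_closure)
  have Fsub: "F \<subseteq> range act" unfolding F_def by auto
  have clsub: "closure (F - {f}) \<subseteq> enveloping act" unfolding enveloping_def
    using Fsub by (intro closure_mono) auto
  have Asub: "F - {f} \<subseteq> enveloping act" by (meson clsub closure_subset order_trans)
  have fr: "frechet_set (enveloping act)" using assms(4) by (simp add: tame_def)
  have fe: "f \<in> enveloping act \<inter> closure (F - {f})" using fcl clsub by blast
  have "\<exists>s. (\<forall>n. s n \<in> F - {f}) \<and> s \<longlonglongrightarrow> f"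
    using fr[unfolded frechet_set_def, rule_format, OF Asub fe] .
  then obtain s where s: "\<forall>n. s n \<in> F - {f}" and sl: "s \<longlonglongrightarrow> f" by blast
  have "\<forall>n. \<exists>m. s n = act (g m)"
  proof
    fix n have "s n \<in> F" using s by blast
    then show "\<exists>m. s n = act (g m)" unfolding F_def by blast
  qed
  then obtain k where k: "\<And>n. s n = act (g (k n))" by metis
  have sf: "\<And>n. s n \<noteq> f" using s by blast
  show False
  proof (cases "\<exists>M. \<forall>n. k n \<le> M")
    case True
    then obtain M where M: "\<And>n. k n \<le> M" by blast
    have fin: "finite (range k)" using M by (meson finite_atMost finite_subset image_subset_iff atMost_iff)
    have ev: "\<forall>m\<in>range k. eventually (\<lambda>n. k n \<noteq> m) sequentially"
    proof
      fix m assume "m \<in> range k"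
      then obtain n0 where "m = k n0" by blast
      then have "act (g m) \<noteq> f" using sf k by metis
      then obtain y where y: "act (g m) y \<noteq> f y" by blast
      have "(\<lambda>n. s n y) \<longlonglongrightarrow> f y" using ptw[OF sl] .
      moreover have "dist (act (g m) y) (f y) > 0" using y by simp
      ultimately have "eventually (\<lambda>n. dist (s n y) (f y) < dist (act (g m) y) (f y)) sequentially"
        by (rule tendstoD)
      then show "eventually (\<lambda>n. k n \<noteq> m) sequentially"
        by eventually_elim (metis k less_irrefl)
    qed
    have "eventually (\<lambda>n. \<forall>m\<in>range k. k n \<noteq> m) sequentially"
      using eventually_ball_finite[OF fin ev] .
    then obtain N where "\<forall>n\<ge>N. \<forall>m\<in>range k. k n \<noteq> m" unfolding eventually_sequentially by blast
    then show False by blast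
  next
    case False
    then have unb: "\<forall>M. \<exists>n. k n > M" by (meson not_le)
    have sm: "strict_mono (subs k)" "strict_mono (k \<circ> subs k)" using subs_mono[OF unb] by auto
    define r where "r = k \<circ> subs k"
    have ir: "inj r" unfolding r_def using sm(2) strict_mono_imp_inj_on by blast
    have "(s \<circ> subs k) \<longlonglongrightarrow> f" using LIMSEQ_subseq_LIMSEQ[OF sl sm(1)] .
    then have L: "(\<lambda>j. act (g (r j))) \<longlonglongrightarrow> f" unfolding r_def by (simp add: k comp_def)
    have "\<forall>x. (\<lambda>j. act (g (r j)) x) \<longlonglongrightarrow> f x" using ptw[OF L] by blast
    then show False using nc[OF ir] by blast
  qed
qed

end
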